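(* Let $\mathscr H$ be a complex Hilbert space and $\mathbf{X},\mathbf{Y}\in\mathbb{B}(\mathscr H)^d$. Then $$\max\{w_e(\mathbf{X}),w_e(\mathbf{Y})\}\le w_e\left(\begin{bmatrix}\mathbf{X}&\mathbf{Y}\\-\mathbf{Y}&-\mathbf{X}\end{bmatrix}\right)\le w_e(\mathbf{X})+w_e(\mathbf{Y}).$$
   Context: $\mathbb{B}(\mathscr H)$ denotes the bounded linear operators on $\mathscr H$. $w_e(\mathbf{T})=\sup\{(\sum_{k}|\langle T_kx,x\rangle|^2)^{1/2}: \|x\|=1\}$ for $\mathbf{T}=(T_1,\dots,T_d)$; $-\mathbf{X}=(-X_1,\dots,-X_d)$. For $d$-tuples, $\begin{bmatrix}\mathbf{X}&\mathbf{Y}\\\mathbf{Z}&\mathbf{W}\end{bmatrix}$ denotes the $d$-tuple $\left(\begin{bmatrix}X_k&Y_k\\Z_k&W_k\end{bmatrix}\right)_{k=1}^d$ of operators on $\mathscr H\oplus\mathscr H$. *)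

theory Defs
  imports "HOL-Analysis.Analysis"
begin

class complex_vector = real_vector +
  fixes scaleC :: "complex \<Rightarrow> 'a \<Rightarrow> 'a" (infixr \<open>*\<^sub>C\<close> 75)
  assumes scaleC_add_right: "a *\<^sub>C (x + y) = a *\<^sub>C x + a *\<^sub>C y"
    and scaleC_add_left: "(a + b) *\<^sub>C x = a *\<^sub>C x + b *\<^sub>C x"
    and scaleC_scaleC: "a *\<^sub>C (b *\<^sub>C x) = (a * b) *\<^sub>C x"
    and scaleC_one: "1 *\<^sub>C x = x"
    and scaleR_scaleC: "scaleR r x = complex_of_real r *\<^sub>C x"

class complex_inner = real_inner + complex_vector +
  fixes cinner :: "'a \<Rightarrow> 'a \<Rightarrow> complex"
  assumes cinner_commute: "cinner x y = cnj (cinner y x)"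
    and cinner_add_left: "cinner (x + y) z = cinner x z + cinner y z"
    and cinner_scaleC_left: "cinner (a *\<^sub>C x) y = cnj a * cinner x y"
    and inner_is_Re_cinner: "inner x y = Re (cinner x y)"

class complex_hilbert = complex_inner + complete_space

definition bounded_clinear :: "('a::complex_inner \<Rightarrow> 'a) \<Rightarrow> bool" where
  "bounded_clinear f \<longleftrightarrow>
     (\<forall>x y. f (x + y) = f x + f y) \<and> (\<forall>c x. f (c *\<^sub>C x) = c *\<^sub>C f x) \<and>
     (\<exists>K. \<forall>x. norm (f x) \<le> norm x * K)"

instantiation prod :: (complex_vector, complex_vector) complex_vector
begin
definition scaleC_prod_def: "c *\<^sub>C p = (c *\<^sub>C fst p, c *\<^sub>C snd p)"
instance
  by standard (simp_all add: scaleC_prod_def scaleC_add_right scaleC_add_left scaleC_scaleC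
      scaleC_one scaleR_scaleC prod_eq_iff)
end

instantiation prod :: (complex_inner, complex_inner) complex_inner
begin
definition cinner_prod_def: "cinner p q = cinner (fst p) (fst q) + cinner (snd p) (snd q)"
instance
proof
  fix x y z :: "'a \<times> 'b" and a :: complex
  show "cinner x y = cnj (cinner y x)"
    unfolding cinner_prod_def by (metis complex_cnj_add cinner_commute)
  show "cinner (x + y) z = cinner x z + cinner y z"
    unfolding cinner_prod_def by (simp add: cinner_add_left)
  show "cinner (a *\<^sub>C x) y = cnj a * cinner x y"
    unfolding cinner_prod_def scaleC_prod_def by (simp add: cinner_scaleC_left distrib_left)
  show "inner x y = Re (cinner x y)"
    unfolding cinner_prod_def inner_prod_def by (simp add: inner_is_Re_cinner)
qed
end

instance prod :: (complex_hilbert, complex_hilbert) complex_hilbert ..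

text \<open>A d-tuple T = (T_1,...,T_d) is represented as a function on indices 0..d-1.
  w_e(T) = sup { (sum_k |<T_k x, x>|^2)^(1/2) : ||x|| = 1 }; 0 is included in the set
  so that the supremum is also well defined (= 0) on the trivial space.\<close>
definition euclid_op_radius :: "nat \<Rightarrow> (nat \<Rightarrow> 'a::complex_inner \<Rightarrow> 'a) \<Rightarrow> real" where
  "euclid_op_radius d T =
     Sup (insert 0 {sqrt (\<Sum>k<d. (cmod (cinner (T k x) x))\<^sup>2) | x. norm x = 1})"

definition tuple_neg :: "(nat \<Rightarrow> 'a::complex_vector \<Rightarrow> 'a) \<Rightarrow> nat \<Rightarrow> 'a \<Rightarrow> 'a" where
  "tuple_neg X = (\<lambda>k x. - X k x)"

text \<open>Block operator tuple [[X, Y], [Z, W]] acting on H \<oplus> H.\<close>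
definition block_tuple ::
  "(nat \<Rightarrow> 'a \<Rightarrow> 'a) \<Rightarrow> (nat \<Rightarrow> 'a \<Rightarrow> 'a) \<Rightarrow> (nat \<Rightarrow> 'a \<Rightarrow> 'a) \<Rightarrow> (nat \<Rightarrow> 'a \<Rightarrow> 'a)
     \<Rightarrow> nat \<Rightarrow> 'a \<times> 'a \<Rightarrow> ('a::complex_vector) \<times> 'a" where
  "block_tuple X Y Z W = (\<lambda>k p. (X k (fst p) + Y k (snd p), Z k (fst p) + W k (snd p)))"

end

theory Submission
  imports Defs
begin

lemma cinner_add_right: "cinner x (y + z) = cinner x y + cinner x z"
proof -
  have "cinner x (y + z) = cnj (cinner (y + z) x)" by (rule cinner_commute)
  also have "\<dots> = cnj (cinner y x) + cnj (cinner z x)" by (simp only: cinner_add_left complex_cnj_add)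
  also have "\<dots> = cinner x y + cinner x z" by (simp only: cinner_commute[of x y] cinner_commute[of x z] complex_cnj_cnj)
  finally show ?thesis .
qed
lemma cinner_scaleC_right: "cinner x (a *\<^sub>C y) = a * cinner x y"
proof -
  have "cinner x (a *\<^sub>C y) = cnj (cinner (a *\<^sub>C y) x)" by (rule cinner_commute)
  also have "\<dots> = a * cnj (cinner y x)" by (simp only: cinner_scaleC_left complex_cnj_mult complex_cnj_cnj)
  also have "\<dots> = a * cinner x y" by (simp only: cinner_commute[of x y] complex_cnj_cnj)
  finally show ?thesis .
qed
lemma cinner_zero_left[simp]: "cinner 0 y = 0"
  using cinner_add_left[of 0 0 y] by simp
lemma cinner_zero_right[simp]: "cinner y 0 = 0"
  using cinner_add_right[of y 0 0] by simp
lemma cinner_minus_left: "cinner (- x) y = - cinner x y"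
proof -
  have "0 = cinner x y + cinner (- x) y" using cinner_add_left[of x "- x" y] by simp
  thus ?thesis by (simp add: eq_neg_iff_add_eq_0 add.commute)
qed
lemma cinner_minus_right: "cinner y (- x) = - cinner y x"
proof -
  have "0 = cinner y x + cinner y (- x)" using cinner_add_right[of y x "- x"] by simp
  thus ?thesis by (simp add: eq_neg_iff_add_eq_0 add.commute)
qed
lemma cinner_diff_left: "cinner (x - z) y = cinner x y - cinner z y"
  by (simp only: diff_conv_add_uminus cinner_add_left cinner_minus_left)
lemma cinner_diff_right: "cinner y (x - z) = cinner y x - cinner y z"
  by (simp only: diff_conv_add_uminus cinner_add_right cinner_minus_right)
lemma cinner_self_real: "cinner x x = complex_of_real ((norm x)\<^sup>2)"
proof -
  have "Im (cinner x x) = 0" using cinner_commute[of x x]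
    by (metis cnj.simps(2) neg_equal_zero)
  moreover have "Re (cinner x x) = (norm x)\<^sup>2"
    by (simp add: power2_norm_eq_inner inner_is_Re_cinner)
  ultimately show ?thesis by (simp add: complex_eq_iff)
qed
lemma norm_scaleC: "norm (a *\<^sub>C (x::'a::complex_inner)) = cmod a * norm x"
proof -
  have "complex_of_real ((norm (a *\<^sub>C x))\<^sup>2) = cinner (a *\<^sub>C x) (a *\<^sub>C x)"
    by (rule cinner_self_real[symmetric])
  also have "\<dots> = cnj a * a * cinner x x"
    by (simp add: cinner_scaleC_left cinner_scaleC_right)
  also have "\<dots> = cnj a * a * complex_of_real ((norm x)\<^sup>2)"
    by (simp only: cinner_self_real)
  also have "cnj a * a = complex_of_real ((cmod a)\<^sup>2)"
    by (metis complex_norm_square mult.commute)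
  finally have "(norm (a *\<^sub>C x))\<^sup>2 = (cmod a * norm x)\<^sup>2"
    by (metis of_real_eq_iff of_real_mult power_mult_distrib)
  thus ?thesis by (simp add: power2_eq_iff_nonneg)
qed
lemma cmod_cinner_le: "cmod (cinner x y) \<le> 2 * norm x * norm y"
proof -
  have r: "\<bar>Re (cinner x y)\<bar> \<le> norm x * norm y"
    using Cauchy_Schwarz_ineq2[of x y] by (simp only: inner_is_Re_cinner)
  have "Re (cinner x (\<i> *\<^sub>C y)) = - Im (cinner x y)"
    by (simp only: cinner_scaleC_right) simp
  moreover have "\<bar>Re (cinner x (\<i> *\<^sub>C y))\<bar> \<le> norm x * norm y"
    using Cauchy_Schwarz_ineq2[of x "\<i> *\<^sub>C y"] by (simp only: inner_is_Re_cinner norm_scaleC norm_ii mult_1)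
  ultimately have i: "\<bar>Im (cinner x y)\<bar> \<le> norm x * norm y" by simp
  show ?thesis using cmod_le[of "cinner x y"] r i by linarith
qed
lemma parallelogram: "(norm (x + (y::'a::real_inner)))\<^sup>2 + (norm (x - y))\<^sup>2 = 2 * ((norm x)\<^sup>2 + (norm y)\<^sup>2)"
  unfolding power2_norm_eq_inner by (simp add: inner_add_left inner_add_right inner_diff_left inner_diff_right inner_commute)

lemma bcl_add: "bounded_clinear f \<Longrightarrow> f (x + y) = f x + f y"
  by (simp add: bounded_clinear_def)
lemma bcl_scale: "bounded_clinear f \<Longrightarrow> f (c *\<^sub>C x) = c *\<^sub>C f x"
  by (simp add: bounded_clinear_def)
lemma minus_scaleC: "- (x::'a::complex_vector) = (-1) *\<^sub>C x"
  by (metis of_real_1 of_real_minus scaleR_minus1_left scaleR_scaleC)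
lemma bcl_minus: "bounded_clinear f \<Longrightarrow> f (- x) = - f x"
  by (metis bcl_scale minus_scaleC)
lemma bcl_zero: "bounded_clinear f \<Longrightarrow> f 0 = 0"
  by (metis add_cancel_right_left bcl_add add_0)
lemma bcl_diff: "bounded_clinear f \<Longrightarrow> f (x - y) = f x - f y"
  by (simp only: diff_conv_add_uminus bcl_add bcl_minus)

definition FF :: "nat \<Rightarrow> (nat \<Rightarrow> 'a::complex_inner \<Rightarrow> 'a) \<Rightarrow> 'a \<Rightarrow> real" where
  "FF d T x = L2_set (\<lambda>k. cmod (cinner (T k x) x)) {..<d}"

lemma er_alt: "euclid_op_radius d T = Sup (insert 0 (FF d T ` {x. norm x = 1}))"
  unfolding euclid_op_radius_def FF_def L2_set_def setcompr_eq_image by simp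

lemma er_bdd:
  assumes "\<And>k. k < d \<Longrightarrow> bounded_clinear (T k)"
  shows "bdd_above (insert 0 (FF d T ` {x. norm x = 1}))"
proof -
  have "\<forall>k. \<exists>K. k < d \<longrightarrow> (\<forall>x. norm (T k x) \<le> norm x * K)"
    using assms unfolding bounded_clinear_def by blast
  then obtain K where K: "\<And>k x. k < d \<Longrightarrow> norm (T k x) \<le> norm x * K k" by metis
  have "FF d T x \<le> (\<Sum>k<d. 2 * K k)" if "norm x = 1" for x
  proof -
    have "FF d T x \<le> (\<Sum>k<d. cmod (cinner (T k x) x))"
      unfolding FF_def by (rule L2_set_le_sum) simp
    also have "\<dots> \<le> (\<Sum>k<d. 2 * K k)"
    proof (rule sum_mono)
      fix k assume "k \<in> {..<d}"
      hence "norm (T k x) \<le> K k" using K[of k x] that by simp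
      thus "cmod (cinner (T k x) x) \<le> 2 * K k"
        using cmod_cinner_le[of "T k x" x] that by simp
    qed
    finally show ?thesis .
  qed
  hence "\<forall>z \<in> insert 0 (FF d T ` {x. norm x = 1}). z \<le> max 0 (\<Sum>k<d. 2 * K k)"
    by (auto simp: le_max_iff_disj)
  thus ?thesis by (meson bdd_above.I)
qed

lemma er_upper: "bdd_above (insert 0 (FF d T ` {x. norm x = 1})) \<Longrightarrow> norm x = 1 \<Longrightarrow>
   FF d T x \<le> euclid_op_radius d T"
  unfolding er_alt by (rule cSup_upper) auto

lemma er_nonneg: "bdd_above (insert 0 (FF d T ` {x. norm x = 1})) \<Longrightarrow> 0 \<le> euclid_op_radius d T"
  unfolding er_alt by (rule cSup_upper) auto

lemma er_least: "(\<And>x. norm x = 1 \<Longrightarrow> FF d T x \<le> B) \<Longrightarrow> 0 \<le> B \<Longrightarrow> euclid_op_radius d T \<le> B"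
  unfolding er_alt by (rule cSup_least) auto

lemma er_hom:
  assumes "\<And>k. k < d \<Longrightarrow> bounded_clinear (T k)"
  shows "FF d T z \<le> euclid_op_radius d T * (norm z)\<^sup>2"
proof (cases "z = 0")
  case True
  thus ?thesis using assms bcl_zero unfolding FF_def by (simp add: L2_set_def)
next
  case False
  define c where "c = complex_of_real (norm z)"
  define e where "e = inverse c *\<^sub>C z"
  have c0: "c \<noteq> 0" using False c_def by simp
  have ze: "z = c *\<^sub>C e" unfolding e_def using c0 by (simp add: scaleC_scaleC scaleC_one)
  have ne: "norm e = 1" unfolding e_def c_def using False
    by (simp add: norm_scaleC norm_inverse)
  have "cmod (cinner (T k z) z) = (norm z)\<^sup>2 * cmod (cinner (T k e) e)" if "k < d" for k
  proof -
    have "cinner (T k z) z = cnj c * c * cinner (T k e) e"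
      unfolding ze using assms[OF that] by (simp add: bcl_scale cinner_scaleC_left cinner_scaleC_right)
    thus ?thesis by (simp add: c_def norm_mult power2_eq_square)
  qed
  hence "FF d T z = L2_set (\<lambda>k. (norm z)\<^sup>2 * cmod (cinner (T k e) e)) {..<d}"
    unfolding FF_def by (intro L2_set_cong) auto
  also have "\<dots> = (norm z)\<^sup>2 * FF d T e"
    unfolding FF_def by (simp add: L2_set_right_distrib)
  also have "\<dots> \<le> (norm z)\<^sup>2 * euclid_op_radius d T"
    using er_upper[OF er_bdd[OF assms] ne] by (simp add: mult_left_mono)
  finally show ?thesis by (simp add: mult.commute)
qed

lemma key_identity:
  fixes X Y :: "nat \<Rightarrow> 'a::complex_inner \<Rightarrow> 'a"
  assumes "bounded_clinear (X k)" "bounded_clinear (Y k)"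
  shows "cinner (block_tuple X Y (tuple_neg Y) (tuple_neg X) k (x, y)) (x, y)
    = cinner (X k x) x - cinner (X k y) y + (\<i>/2) * (cinner (Y k (x + \<i> *\<^sub>C y)) (x + \<i> *\<^sub>C y)
        - cinner (Y k (x - \<i> *\<^sub>C y)) (x - \<i> *\<^sub>C y))"
  using assms
  by (simp add: block_tuple_def tuple_neg_def cinner_prod_def bcl_add bcl_diff bcl_scale
      cinner_add_left cinner_add_right cinner_diff_left cinner_diff_right cinner_minus_left
      cinner_minus_right cinner_scaleC_left cinner_scaleC_right algebra_simps)

lemma key_identity2:
  fixes X Y :: "nat \<Rightarrow> 'a::complex_inner \<Rightarrow> 'a"
  assumes "bounded_clinear (X k)" "bounded_clinear (Y k)"
  shows "cinner (block_tuple X Y (tuple_neg Y) (tuple_neg X) k (a *\<^sub>C x, b *\<^sub>C x)) (a *\<^sub>C x, b *\<^sub>C x)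
    = (cnj a * a - cnj b * b) * cinner (X k x) x + (cnj b * a - cnj a * b) * cinner (Y k x) x"
  using assms
  by (simp add: block_tuple_def tuple_neg_def cinner_prod_def bcl_add bcl_diff bcl_scale bcl_minus
      cinner_add_left cinner_add_right cinner_diff_left cinner_diff_right cinner_minus_left
      cinner_minus_right cinner_scaleC_left cinner_scaleC_right algebra_simps)

theorem theorem3p10:
  fixes X Y :: "nat \<Rightarrow> 'a::complex_hilbert \<Rightarrow> 'a" and d :: nat
  assumes "\<And>k. k < d \<Longrightarrow> bounded_clinear (X k)"
    and "\<And>k. k < d \<Longrightarrow> bounded_clinear (Y k)"
  shows "max (euclid_op_radius d X) (euclid_op_radius d Y)
           \<le> euclid_op_radius d (block_tuple X Y (tuple_neg Y) (tuple_neg X))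
         \<and> euclid_op_radius d (block_tuple X Y (tuple_neg Y) (tuple_neg X))
           \<le> euclid_op_radius d X + euclid_op_radius d Y"
proof -
  define G where "G = block_tuple X Y (tuple_neg Y) (tuple_neg X)"
  define wX where "wX = euclid_op_radius d X"
  define wY where "wY = euclid_op_radius d Y"
  have wX0: "0 \<le> wX" unfolding wX_def by (rule er_nonneg[OF er_bdd[OF assms(1)]])
  have wY0: "0 \<le> wY" unfolding wY_def by (rule er_nonneg[OF er_bdd[OF assms(2)]])
  have upG: "FF d G p \<le> wX + wY" if "norm p = 1" for p
  proof -
    obtain x y where p: "p = (x, y)" by fastforce
    define u where "u = x + \<i> *\<^sub>C y"
    define v where "v = x - \<i> *\<^sub>C y"
    have nxy: "(norm x)\<^sup>2 + (norm y)\<^sup>2 = 1"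
      using that unfolding p norm_Pair by (metis real_sqrt_eq_1_iff)
    have nuv: "(norm u)\<^sup>2 + (norm v)\<^sup>2 = 2"
      unfolding u_def v_def using parallelogram[of x "\<i> *\<^sub>C y"] nxy by (simp add: norm_scaleC)
    define f1 where "f1 k = cmod (cinner (X k x) x)" for k
    define f2 where "f2 k = cmod (cinner (X k y) y)" for k
    define f3 where "f3 k = cmod (cinner (Y k u) u)" for k
    define f4 where "f4 k = cmod (cinner (Y k v) v)" for k
    have pt: "cmod (cinner (G k p) p) \<le> (f1 k + f2 k) + 1/2 * (f3 k + f4 k)" if "k \<in> {..<d}" for k
    proof -
      have "cinner (G k p) p = cinner (X k x) x - cinner (X k y) y + (\<i>/2) * (cinner (Y k u) u - cinner (Y k v) v)"
        unfolding G_def p u_def v_def using that assms by (intro key_identity) auto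
      also have "cmod \<dots> \<le> (f1 k + f2 k) + 1/2 * (f3 k + f4 k)"
      proof -
        have "cmod ((\<i>/2) * (cinner (Y k u) u - cinner (Y k v) v)) \<le> 1/2 * (f3 k + f4 k)"
          unfolding f3_def f4_def by (simp add: norm_mult norm_divide norm_triangle_ineq4)
        moreover have "cmod (cinner (X k x) x - cinner (X k y) y) \<le> f1 k + f2 k"
          unfolding f1_def f2_def by (rule norm_triangle_ineq4)
        ultimately show ?thesis by (meson add_mono norm_triangle_le)
      qed
      finally show ?thesis .
    qed
    have "FF d G p \<le> L2_set (\<lambda>k. (f1 k + f2 k) + 1/2 * (f3 k + f4 k)) {..<d}"
      unfolding FF_def by (rule L2_set_mono) (use pt in auto)
    also have "\<dots> \<le> L2_set (\<lambda>k. f1 k + f2 k) {..<d} + L2_set (\<lambda>k. 1/2 * (f3 k + f4 k)) {..<d}"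
      by (rule L2_set_triangle_ineq)
    also have "\<dots> = L2_set (\<lambda>k. f1 k + f2 k) {..<d} + 1/2 * L2_set (\<lambda>k. f3 k + f4 k) {..<d}"
      by (subst L2_set_right_distrib[of "1/2"]) simp_all
    also have "\<dots> \<le> (L2_set f1 {..<d} + L2_set f2 {..<d}) + 1/2 * (L2_set f3 {..<d} + L2_set f4 {..<d})"
      by (intro add_mono mult_left_mono L2_set_triangle_ineq) auto
    also have "\<dots> \<le> (wX * (norm x)\<^sup>2 + wX * (norm y)\<^sup>2) + 1/2 * (wY * (norm u)\<^sup>2 + wY * (norm v)\<^sup>2)"
      unfolding f1_def f2_def f3_def f4_def wX_def wY_def
      by (intro add_mono mult_left_mono er_hom[unfolded FF_def]) (use assms in auto)
    also have "\<dots> = wX + wY"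
      using nxy nuv by (simp add: algebra_simps flip: distrib_left)
    finally show ?thesis .
  qed
  have up: "euclid_op_radius d G \<le> wX + wY"
    by (rule er_least) (use upG wX0 wY0 in auto)
  have bddG: "bdd_above (insert 0 (FF d G ` {x. norm x = 1}))"
    using upG wX0 wY0 by (intro bdd_aboveI[where M="wX + wY"]) auto
  have lowX: "wX \<le> euclid_op_radius d G"
    unfolding wX_def
  proof (rule er_least)
    fix x :: 'a assume nx: "norm x = 1"
    have "FF d X x = FF d G (x, 0)"
      unfolding FF_def G_def using assms
      by (intro L2_set_cong) (auto simp: block_tuple_def tuple_neg_def cinner_prod_def bcl_zero)
    also have "\<dots> \<le> euclid_op_radius d G"
      by (rule er_upper[OF bddG]) (simp add: norm_Pair nx)
    finally show "FF d X x \<le> euclid_op_radius d G" .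
  qed (rule er_nonneg[OF bddG])
  have lowY: "wY \<le> euclid_op_radius d G"
    unfolding wY_def
  proof (rule er_least)
    fix x :: 'a assume nx: "norm x = 1"
    define c where "c = complex_of_real (1 / sqrt 2)"
    have cc: "cnj c * c = 1/2" unfolding c_def
      by (simp flip: of_real_mult)
    have "FF d Y x = FF d G (c *\<^sub>C x, (c * \<i>) *\<^sub>C x)"
      unfolding FF_def G_def
    proof (intro L2_set_cong refl)
      fix k assume "k \<in> {..<d}"
      hence "cinner (block_tuple X Y (tuple_neg Y) (tuple_neg X) k (c *\<^sub>C x, (c * \<i>) *\<^sub>C x)) (c *\<^sub>C x, (c * \<i>) *\<^sub>C x)
         = (cnj c * c - cnj (c * \<i>) * (c * \<i>)) * cinner (X k x) x + (cnj (c * \<i>) * c - cnj c * (c * \<i>)) * cinner (Y k x) x"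
        using assms by (intro key_identity2) auto
      also have "\<dots> = - \<i> * cinner (Y k x) x"
        using cc by (simp add: algebra_simps)
      finally show "cmod (cinner (Y k x) x) = cmod (cinner (block_tuple X Y (tuple_neg Y) (tuple_neg X) k (c *\<^sub>C x, (c * \<i>) *\<^sub>C x)) (c *\<^sub>C x, (c * \<i>) *\<^sub>C x))"
        by (simp add: norm_mult)
    qed
    also have "\<dots> \<le> euclid_op_radius d G"
    proof (rule er_upper[OF bddG])
      have "(cmod c)\<^sup>2 = 1/2" unfolding c_def norm_of_real by (simp add: power_divide)
      thus "norm (c *\<^sub>C x, (c * \<i>) *\<^sub>C x) = 1"
        by (simp add: norm_Pair norm_scaleC nx norm_mult)
    qed
    finally show "FF d Y x \<le> euclid_op_radius d G" .
  qed (rule er_nonneg[OF bddG])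
  show ?thesis using up lowX lowY unfolding G_def wX_def wY_def by simp
qed
end
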